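(* Let $G$ be a graph with at least one vertex that has property $\mathsf{R}$. Then for every feedback vertex set $X$ of $G$, strictly more than $\frac{|E(G)|}{5}$ edges of $G$ have at least one endpoint in $X$.
   Context: A graph $G$ has property $\mathsf{R}$ if its minimum degree is at least $2$ and no two adjacent vertices of $G$ both have degree exactly $2$. A feedback vertex set of $G$ is a set $X\subseteq V(G)$ such that $G-X$ is a forest. *)

theory Defs
  imports Complex_Main
begin

definition graph :: "'a set \<Rightarrow> 'a set set \<Rightarrow> bool" where
  "graph V E \<longleftrightarrow> finite V \<and> (\<forall>e\<in>E. e \<subseteq> V \<and> card e = 2)"

definition degree :: "'a set set \<Rightarrow> 'a \<Rightarrow> nat" where
  "degree E v = card {e\<in>E. v \<in> e}"

definition propR :: "'a set \<Rightarrow> 'a set set \<Rightarrow> bool" where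
  "propR V E \<longleftrightarrow> (\<forall>v\<in>V. degree E v \<ge> 2) \<and>
     (\<forall>u\<in>V. \<forall>v\<in>V. {u, v} \<in> E \<longrightarrow> \<not> (degree E u = 2 \<and> degree E v = 2))"

definition del_vertices :: "'a set set \<Rightarrow> 'a set \<Rightarrow> 'a set set" where
  "del_vertices E X = {e\<in>E. e \<inter> X = {}}"

definition is_cycle :: "'a set \<Rightarrow> 'a set set \<Rightarrow> 'a list \<Rightarrow> bool" where
  "is_cycle V E cs \<longleftrightarrow> length cs \<ge> 3 \<and> distinct cs \<and> set cs \<subseteq> V \<and>
     (\<forall>i < length cs - 1. {cs ! i, cs ! (i+1)} \<in> E) \<and> {last cs, hd cs} \<in> E"

definition forest :: "'a set \<Rightarrow> 'a set set \<Rightarrow> bool" where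
  "forest V E \<longleftrightarrow> \<not> (\<exists>cs. is_cycle V E cs)"

definition feedback_vertex_set :: "'a set \<Rightarrow> 'a set set \<Rightarrow> 'a set \<Rightarrow> bool" where
  "feedback_vertex_set V E X \<longleftrightarrow> X \<subseteq> V \<and> forest (V - X) (del_vertices E X)"

end

theory Submission
  imports Defs
begin

lemma cycle_mono:
  assumes "is_cycle V E cs" "V \<subseteq> V2" "E \<subseteq> E2"
  shows "is_cycle V2 E2 cs"
  using assms unfolding is_cycle_def by blast

lemma double_count:
  assumes "finite A" "finite S"
  shows "(\<Sum>v\<in>A. card {e\<in>S. v\<in>e}) = (\<Sum>e\<in>S. card (e \<inter> A))"
proof -
  have 1: "\<And>v. card {e\<in>S. v\<in>e} = (\<Sum>e\<in>S. if v \<in> e then 1 else 0)"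
    using sum.inter_filter[OF assms(2), of "\<lambda>_. (1::nat)"] by simp
  have 2: "\<And>e. card (e \<inter> A) = (\<Sum>v\<in>A. if v \<in> e then 1 else 0)"
  proof -
    fix e
    have "e \<inter> A = {v\<in>A. v\<in>e}" by blast
    then show "card (e \<inter> A) = (\<Sum>v\<in>A. if v \<in> e then 1 else 0)"
      using sum.inter_filter[OF assms(1), of "\<lambda>_. (1::nat)"] by simp
  qed
  show ?thesis unfolding 1 2 by (rule sum.swap)
qed

lemma low_degree:
  assumes fin: "finite V" and edges: "\<forall>e\<in>E. e \<subseteq> V \<and> card e = 2"
    and acyc: "\<not> (\<exists>cs. is_cycle V E cs)" and ne: "V \<noteq> {}"
  shows "\<exists>v\<in>V. card {e\<in>E. v\<in>e} \<le> 1"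
proof (rule ccontr)
  assume "\<not> ?thesis"
  then have deg: "\<forall>v\<in>V. card {e\<in>E. v\<in>e} \<ge> 2" by auto
  define path where "path ps \<longleftrightarrow> ps \<noteq> [] \<and> distinct ps \<and> set ps \<subseteq> V \<and>
     (\<forall>i < length ps - 1. {ps ! i, ps ! (i+1)} \<in> E)" for ps
  obtain v0 where "v0 \<in> V" using ne by blast
  then have p0: "path [v0]" unfolding path_def by simp
  have bnd: "\<forall>ps. path ps \<longrightarrow> length ps < card V + 1"
  proof (intro allI impI)
    fix ps assume "path ps"
    then have "card (set ps) \<le> card V" "card (set ps) = length ps"
      using card_mono[OF fin] distinct_card unfolding path_def by auto
    then show "length ps < card V + 1" by simp
  qed
  obtain ps where pp: "path ps" and maxl: "\<forall>qs. path qs \<longrightarrow> length qs \<le> length ps"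
    using ex_has_greatest_nat[of path "[v0]" length "card V + 1"] p0 bnd by blast
  define u where "u = hd ps"
  have ps_ne: "ps \<noteq> []" using pp path_def by simp
  have u0: "u = ps ! 0" using ps_ne unfolding u_def by (simp add: hd_conv_nth)
  have uV: "u \<in> V" using pp ps_ne unfolding path_def u_def by auto
  have nbr_in: "\<exists>j<length ps. ps ! j = w" if "{u, w} \<in> E" for w
  proof (rule ccontr)
    assume "\<not> ?thesis"
    then have wn: "w \<notin> set ps" by (auto simp: in_set_conv_nth)
    have wV: "w \<in> V" using that edges by auto
    have "path (w # ps)"
      unfolding path_def
    proof (intro conjI)
      show "\<forall>i<length (w # ps) - 1. {(w # ps) ! i, (w # ps) ! (i + 1)} \<in> E"
      proof (intro allI impI)
        fix i assume i: "i < length (w # ps) - 1"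
        show "{(w # ps) ! i, (w # ps) ! (i + 1)} \<in> E"
        proof (cases i)
          case 0 then show ?thesis using that u0 by (simp add: insert_commute)
        next
          case (Suc k) then show ?thesis using pp i unfolding path_def by auto
        qed
      qed
    qed (use pp wn wV in \<open>auto simp: path_def\<close>)
    then show False using maxl by fastforce
  qed
  obtain e1 e2 where e12: "e1 \<in> E" "e2 \<in> E" "u \<in> e1" "u \<in> e2" "e1 \<noteq> e2"
  proof -
    have "card {e\<in>E. u\<in>e} \<ge> 2" using deg uV by auto
    then obtain A where "A \<subseteq> {e\<in>E. u\<in>e}" "card A = 2"
      by (meson obtain_subset_with_card_n)
    then obtain a b where "A = {a,b}" "a \<noteq> b" by (auto simp: card_2_iff)
    then show ?thesis using that \<open>A \<subseteq> _\<close> by auto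
  qed
  have other: "\<exists>w. e = {u, w} \<and> w \<noteq> u" if "e \<in> E" "u \<in> e" for e
  proof -
    obtain a b where "e = {a,b}" "a \<noteq> b" using edges \<open>e \<in> E\<close> by (meson card_2_iff)
    then show ?thesis using that by auto
  qed
  obtain w1 w2 where w: "e1 = {u,w1}" "w1 \<noteq> u" "e2 = {u,w2}" "w2 \<noteq> u"
    using other e12 by meson
  have "w1 \<noteq> w2" using w e12 by auto
  then obtain w where wE: "{u,w} \<in> E" "w \<noteq> u" and wn1: "length ps \<ge> 2 \<longrightarrow> w \<noteq> ps ! 1"
    using w e12 by metis
  obtain j where j: "j < length ps" "ps ! j = w" using nbr_in[OF wE(1)] by blast
  have j0: "j \<noteq> 0" using j wE u0 by (metis)
  have j1: "j \<noteq> 1" using j wn1 by auto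
  define cs where "cs = take (j+1) ps"
  have "is_cycle V E cs"
    unfolding is_cycle_def
  proof (intro conjI)
    show "3 \<le> length cs" using j j0 j1 unfolding cs_def by simp
    show "distinct cs" using pp unfolding cs_def path_def by simp
    show "set cs \<subseteq> V" using pp unfolding cs_def path_def by (meson order_trans set_take_subset)
    show "\<forall>i<length cs - 1. {cs ! i, cs ! (i + 1)} \<in> E"
      using pp j unfolding cs_def path_def by auto
    have "last cs = w" using j unfolding cs_def by (simp add: take_Suc_conv_app_nth)
    moreover have "hd cs = u" using j unfolding cs_def u_def by (simp add: hd_take)
    ultimately show "{last cs, hd cs} \<in> E" using wE by (simp add: insert_commute)
  qed
  then show False using acyc by blast
qed

lemma forest_card:
  assumes "finite V" "\<forall>e\<in>E. e \<subseteq> V \<and> card e = 2"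
    "\<not> (\<exists>cs. is_cycle V E cs)" "V \<noteq> {}"
  shows "card E < card V"
  using assms
proof (induction "card V" arbitrary: V E rule: less_induct)
  case less
  note fin = less.prems(1) and edges = less.prems(2) and acyc = less.prems(3) and ne = less.prems(4)
  have finE: "finite E" using edges fin by (meson PowI finite_Pow_iff finite_subset subsetI)
  obtain v where v: "v \<in> V" "card {e\<in>E. v\<in>e} \<le> 1" using low_degree[OF fin edges acyc ne] by blast
  show ?case
  proof (cases "V = {v}")
    case True
    have "E = {}"
    proof (rule ccontr)
      assume "E \<noteq> {}"
      then obtain e where "e \<in> E" by blast
      then have "e \<subseteq> {v}" "card e = 2" using edges True by auto
      then show False using card_mono[of "{v}" e] by simp
    qed
    then show ?thesis using True by simp
  next
    case False
    define V' where "V' = V - {v}"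
    define E' where "E' = {e\<in>E. v \<notin> e}"
    have ne': "V' \<noteq> {}" using False v unfolding V'_def by blast
    have edges': "\<forall>e\<in>E'. e \<subseteq> V' \<and> card e = 2" using edges unfolding E'_def V'_def by blast
    have acyc': "\<not> (\<exists>cs. is_cycle V' E' cs)"
      using acyc cycle_mono[of V' E' _ V E] unfolding V'_def E'_def by blast
    have lt: "card V' < card V" using v fin unfolding V'_def by (meson card_Diff1_less)
    have IH: "card E' < card V'" using less.hyps[OF lt _ edges' acyc' ne'] fin V'_def by blast
    have "E = E' \<union> {e\<in>E. v\<in>e}" unfolding E'_def by blast
    then have "card E = card E' + card {e\<in>E. v\<in>e}"
      using finE card_Un_disjoint[of E' "{e\<in>E. v\<in>e}"] unfolding E'_def by auto
    moreover have "card V' = card V - 1" using v fin unfolding V'_def by simp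
    ultimately show ?thesis using IH v lt by linarith
  qed
qed

theorem lemma7:
  fixes V :: "'a set" and E :: "'a set set" and X :: "'a set"
  assumes "graph V E" and "V \<noteq> {}" and "propR V E"
    and "feedback_vertex_set V E X"
  shows "real (card {e\<in>E. e \<inter> X \<noteq> {}}) > real (card E) / 5"
proof -
  have fin: "finite V" and edges: "\<forall>e\<in>E. e \<subseteq> V \<and> card e = 2"
    using assms(1) unfolding graph_def by auto
  have finE: "finite E" using edges fin by (meson PowI finite_Pow_iff finite_subset subsetI)
  have XV: "X \<subseteq> V" and acyc: "\<not> (\<exists>cs. is_cycle (V - X) (del_vertices E X) cs)"
    using assms(4) unfolding feedback_vertex_set_def forest_def by auto
  have deg2: "\<forall>v\<in>V. degree E v \<ge> 2" and nobad: "\<forall>u\<in>V. \<forall>v\<in>V. {u, v} \<in> E \<longrightarrow> \<not> (degree E u = 2 \<and> degree E v = 2)"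
    using assms(3) unfolding propR_def by auto
  define VF where "VF = V - X"
  define EF where "EF = del_vertices E X"
  define EXs where "EXs = {e\<in>E. e \<inter> X \<noteq> {}}"
  have finVF: "finite VF" using fin VF_def by simp
  have finEF: "finite EF" using finE unfolding EF_def del_vertices_def by simp
  have finEX: "finite EXs" using finE EXs_def by simp
  have EFe: "\<forall>e\<in>EF. e \<subseteq> VF \<and> card e = 2" using edges unfolding EF_def VF_def del_vertices_def by blast
  have acycF: "\<not> (\<exists>cs. is_cycle VF EF cs)" using acyc unfolding VF_def EF_def .
  have cardE: "card E = card EF + card EXs"
  proof -
    have "E = EF \<union> EXs" "EF \<inter> EXs = {}" unfolding EF_def EXs_def del_vertices_def by auto
    then show ?thesis using finEF finEX card_Un_disjoint by metis
  qed
  have key: "card EF < 4 * card EXs"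
  proof (cases "VF = {}")
    case True
    then have "EF = {}" using EFe edges by fastforce
    obtain v where v: "v \<in> V" using assms(2) by blast
    then have "card {e\<in>E. v\<in>e} \<ge> 2" using deg2 degree_def by metis
    then obtain e where "e \<in> E" "v \<in> e" by (metis (no_types, lifting) card.empty empty_Collect_eq not_numeral_le_zero)
    then have "e \<in> EXs" using v True unfolding EXs_def VF_def by blast
    then have "card EXs > 0" using finEX card_gt_0_iff by blast
    then show ?thesis using \<open>EF = {}\<close> by simp
  next
    case False
    define dF where "dF v = card {e\<in>EF. v\<in>e}" for v
    define xv where "xv v = card {e\<in>EXs. v\<in>e}" for v
    define T2 where "T2 = {v\<in>VF. degree E v = 2 \<and> dF v = 2}"
    define ET where "ET = {e\<in>EF. e \<inter> T2 \<noteq> {}}"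
    have finET: "finite ET" using finEF ET_def by simp
    have degsplit: "degree E v = dF v + xv v" for v
    proof -
      have "{e\<in>E. v\<in>e} = {e\<in>EF. v\<in>e} \<union> {e\<in>EXs. v\<in>e}"
        "{e\<in>EF. v\<in>e} \<inter> {e\<in>EXs. v\<in>e} = {}"
        unfolding EF_def EXs_def del_vertices_def by auto
      moreover have "finite {e\<in>EF. v\<in>e}" "finite {e\<in>EXs. v\<in>e}" using finEF finEX by auto
      ultimately show ?thesis unfolding degree_def dF_def xv_def by (metis card_Un_disjoint)
    qed
    have mF: "card EF < card VF" using forest_card[OF finVF EFe acycF False] .
    have sumdF: "(\<Sum>v\<in>VF. dF v) = 2 * card EF"
    proof -
      have "(\<Sum>v\<in>VF. dF v) = (\<Sum>e\<in>EF. card (e \<inter> VF))"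
        unfolding dF_def using double_count[OF finVF finEF] .
      also have "\<dots> = (\<Sum>e\<in>EF. 2)"
        by (rule sum.cong) (use EFe in \<open>auto simp: Int_absorb2\<close>)
      finally show ?thesis by simp
    qed
    have sumxv: "(\<Sum>v\<in>VF. xv v) \<le> card EXs"
    proof -
      have "(\<Sum>v\<in>VF. xv v) = (\<Sum>e\<in>EXs. card (e \<inter> VF))"
        unfolding xv_def using double_count[OF finVF finEX] .
      also have "\<dots> \<le> (\<Sum>e\<in>EXs. 1)"
      proof (rule sum_mono)
        fix e assume e: "e \<in> EXs"
        then have "e \<inter> VF \<subset> e" unfolding EXs_def VF_def by blast
        moreover have "card e = 2" "finite e" using e edges unfolding EXs_def by (auto intro: card_ge_0_finite)
        ultimately show "card (e \<inter> VF) \<le> 1" using psubset_card_mono[of e "e \<inter> VF"] by simp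
      qed
      finally show ?thesis by simp
    qed
    have T2sub: "T2 \<subseteq> VF" unfolding T2_def by auto
    have ETe: "\<forall>e\<in>ET. e \<subseteq> VF \<and> card e = 2" using EFe unfolding ET_def by auto
    have acycT: "\<not> (\<exists>cs. is_cycle VF ET cs)"
      using acycF cycle_mono[of VF ET _ VF EF] unfolding ET_def by blast
    have mT: "card ET < card VF" using forest_card[OF finVF ETe acycT False] .
    have sumT: "2 * card T2 = card ET"
    proof -
      have "2 * card T2 = (\<Sum>v\<in>T2. dF v)" unfolding T2_def by simp
      also have "\<dots> = (\<Sum>v\<in>T2. card {e\<in>ET. v\<in>e})"
        by (rule sum.cong) (auto simp: dF_def ET_def intro!: arg_cong[where f=card])
      also have "\<dots> = (\<Sum>e\<in>ET. card (e \<inter> T2))"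
        using double_count[OF finite_subset[OF T2sub finVF] finET] .
      also have "\<dots> = (\<Sum>e\<in>ET. 1)"
      proof (rule sum.cong)
        fix e assume e: "e \<in> ET"
        then obtain a b where ab: "e = {a,b}" "a \<noteq> b" using ETe by (meson card_2_iff)
        have "e \<in> E" "a \<in> V" "b \<in> V" using e ab edges unfolding ET_def EF_def del_vertices_def by auto
        then have "\<not> (a \<in> T2 \<and> b \<in> T2)" using nobad ab unfolding T2_def by auto
        moreover have "e \<inter> T2 \<noteq> {}" using e ET_def by auto
        ultimately have "e \<inter> T2 = {a} \<or> e \<inter> T2 = {b}" using ab by auto
        then show "card (e \<inter> T2) = 1" by auto
      qed simp
      finally show ?thesis by simp
    qed
    have pt: "6 \<le> 4 * xv v + 2 * dF v + (if degree E v = 2 \<and> dF v = 2 then 2 else 0)"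
      if "v \<in> VF" for v
    proof -
      have "degree E v \<ge> 2" using deg2 that VF_def by auto
      then show ?thesis using degsplit[of v] by auto
    qed
    have "(\<Sum>v\<in>VF. (6::nat)) \<le> (\<Sum>v\<in>VF. 4 * xv v + 2 * dF v + (if degree E v = 2 \<and> dF v = 2 then 2 else 0))"
      using pt by (rule sum_mono)
    also have "\<dots> = 4 * (\<Sum>v\<in>VF. xv v) + 2 * (\<Sum>v\<in>VF. dF v) + (\<Sum>v\<in>T2. 2)"
      unfolding T2_def sum.inter_filter[OF finVF]
      by (simp add: sum.distrib sum_distrib_left)
    finally have "6 * card VF \<le> 4 * (\<Sum>v\<in>VF. xv v) + 2 * (\<Sum>v\<in>VF. dF v) + 2 * card T2"
      by simp
    then show ?thesis using sumxv sumdF sumT mT mF by linarith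
  qed
  have "card E < 5 * card EXs" using cardE key by linarith
  then have "real (card E) < 5 * real (card EXs)" by linarith
  then show ?thesis unfolding EXs_def by simp
qed

end
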